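(* Let $n\ge 1$, $\pi\in S_n$ and $1\le i\le n+1$. If one deletes the entry $1$ from $s_{1\dot{2}}(\mathrm{ins}_i(\pi))$ and then subtracts $1$ from every remaining entry, the result is exactly $s_{1\dot{2}}(\pi)$. Equivalently, the entries $2,3,\dots,n+1$ appear in $s_{1\dot{2}}(\mathrm{ins}_i(\pi))$ in the same relative order as the entries $1,2,\dots,n$ appear in $s_{1\dot{2}}(\pi)$, with $x$ corresponding to $x-1$.
   Context: The $1\dot{2}$-avoiding stack-sorting map $s_{1\dot{2}}$ is defined as follows. Start with the input $\pi$ and an empty stack. Repeat the following step until both the input and the stack are empty: - If input remains, and either the stack is empty or the next input entry is smaller than the entry at the bottom of the stack, push the next input entry onto the top of the stack. - Otherwise, pop the top entry of the stack and append it to the output. The output word is $s_{1\dot{2}}(\pi)$. For $\pi\in S_n$, $\mathrm{inc}(\pi)$ is the word obtained by adding $1$ to every entry of $\pi$. For $1\le i\le n+1$, $\mathrm{ins}_i(\pi)\in S_{n+1}$ is the permutation obtained from $\mathrm{inc}(\pi)$ by inserting the entry $1$ so that it occupies position $i$. *)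

theory Defs
  imports Main
begin

text \<open>Permutations of [n] are represented as lists in one-line notation.
  The stack is a list whose head is the top and whose last element is the bottom.\<close>

definition is_perm :: "nat \<Rightarrow> nat list \<Rightarrow> bool" where
  "is_perm n p \<longleftrightarrow> distinct p \<and> set p = {1..n}"

function s12_aux :: "nat list \<Rightarrow> nat list \<Rightarrow> nat list \<Rightarrow> nat list" where
  "s12_aux inp stk out =
     (if inp = [] \<and> stk = [] then out
      else if inp \<noteq> [] \<and> (stk = [] \<or> hd inp < last stk)
        then s12_aux (tl inp) (hd inp # stk) out
      else s12_aux inp (tl stk) (out @ [hd stk]))"
  by pat_completeness auto
termination
  by (relation "measure (\<lambda>(inp, stk, out). 2 * length inp + length stk)") (auto simp: neq_Nil_conv)

definition s12 :: "nat list \<Rightarrow> nat list" where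
  "s12 p = s12_aux p [] []"

definition inc :: "nat list \<Rightarrow> nat list" where
  "inc p = map Suc p"

definition ins :: "nat \<Rightarrow> nat list \<Rightarrow> nat list" where
  "ins i p = take (i - 1) (inc p) @ [1] @ drop (i - 1) (inc p)"

end

theory Submission
  imports Defs
begin

declare s12_aux.simps[simp del]

definition g :: "nat list \<Rightarrow> nat list" where
  "g xs = map (\<lambda>x. x - 1) (filter (\<lambda>x. x \<noteq> 1) xs)"

lemma g_simps[simp]: "g [] = []" "g (1 # xs) = g xs" "g (Suc 0 # xs) = g xs"
  "x \<noteq> 1 \<Longrightarrow> g (x # xs) = (x - 1) # g xs" "g (xs @ ys) = g xs @ g ys"
  by (auto simp: g_def)

lemma g_nil_last: "g xs = [] \<Longrightarrow> xs \<noteq> [] \<Longrightarrow> last xs = 1"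
  by (induction xs) (auto simp: g_def split: if_splits)

lemma s12_nil[simp]: "s12_aux [] [] out = out"
  by (subst s12_aux.simps) simp

lemma key:
  "0 \<notin> set inp \<Longrightarrow> 0 \<notin> set stk \<Longrightarrow> (stk \<noteq> [] \<Longrightarrow> g stk \<noteq> [] \<Longrightarrow> last stk = Suc (last (g stk)))
   \<Longrightarrow> g (s12_aux inp stk out) = s12_aux (g inp) (g stk) (g out)"
proof (induction inp stk out rule: s12_aux.induct)
  case (1 inp stk out)
  show ?case
  proof (cases "inp = [] \<and> stk = []")
    case True
    then show ?thesis by simp
  next
    case nb: False
    show ?thesis
    proof (cases "inp \<noteq> [] \<and> (stk = [] \<or> hd inp < last stk)")
      case push: True
      then obtain x xs where inp: "inp = x # xs" by (cases inp) auto
      have L: "s12_aux inp stk out = s12_aux xs (x # stk) out"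
        using push nb inp by (subst s12_aux.simps) simp
      have IH: "g (s12_aux xs (x # stk) out) = s12_aux (g xs) (g (x # stk)) (g out)"
      proof -
        have x0: "x \<noteq> 0" using "1.prems"(1) inp by auto
        have pre: "last (x # stk) = Suc (last (g (x # stk)))" if ne: "g (x # stk) \<noteq> []"
        proof (cases "x = 1")
          case True
          then have "g stk \<noteq> []" using ne by simp
          then have "stk \<noteq> []" by auto
          then show ?thesis using True "1.prems"(3) \<open>g stk \<noteq> []\<close> by simp
        next
          case False
          show ?thesis
          proof (cases "stk = []")
            case True then show ?thesis using False x0 by simp
          next
            case sne: False
            show ?thesis
            proof (cases "g stk = []")
              case True
              then have "last stk = 1" using g_nil_last sne by blast
              then show ?thesis using push inp sne x0 by simp
            next
              case False
              then show ?thesis using \<open>x \<noteq> 1\<close> sne "1.prems"(3) by simp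
            qed
          qed
        qed
        have "0 \<notin> set xs" "0 \<notin> set (x # stk)" using "1.prems"(1,2) inp by auto
        then show ?thesis using "1.IH"(1)[OF nb push] pre inp by simp
      qed
      show ?thesis
      proof (cases "x = 1")
        case True
        then show ?thesis using L IH inp by simp
      next
        case False
        have "s12_aux (g inp) (g stk) (g out) = s12_aux (g xs) ((x - 1) # g stk) (g out)"
        proof -
          have c: "g stk = [] \<or> x - 1 < last (g stk)"
          proof (cases "g stk = []")
            case False
            then have "stk \<noteq> []" by auto
            then show ?thesis using push inp "1.prems"(1,3) False by auto
          qed simp
          show ?thesis using False inp c by (subst s12_aux.simps) simp
        qed
        then show ?thesis using L IH inp False by simp
      qed
    next
      case pop: False
      then obtain t ts where stk: "stk = t # ts" using nb by (cases stk) auto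
      have nb': "\<not> (inp = [] \<and> t # ts = [])" by simp
      have pop': "\<not> (inp \<noteq> [] \<and> (t # ts = [] \<or> hd inp < last (t # ts)))"
        using pop stk by simp
      have L0: "s12_aux inp (t # ts) out = s12_aux inp ts (out @ [t])"
        by (subst s12_aux.simps) (simp only: if_not_P[OF nb'] if_not_P[OF pop'] list.sel)
      have L: "s12_aux inp stk out = s12_aux inp ts (out @ [t])" using L0 stk by simp
      have IH: "g (s12_aux inp ts (out @ [t])) = s12_aux (g inp) (g ts) (g (out @ [t]))"
        using "1.IH"(2)[OF nb pop] "1.prems" stk
        by (cases "t = 1"; cases ts) (auto simp: g_nil_last)
      show ?thesis
      proof (cases "t = 1")
        case True
        then show ?thesis using L IH stk by simp
      next
        case False
        have "s12_aux (g inp) (g stk) (g out) = s12_aux (g inp) (g ts) (g out @ [t - 1])"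
        proof -
          have c: "\<not> (g inp \<noteq> [] \<and> hd (g inp) < last (g stk))"
          proof
            assume a: "g inp \<noteq> [] \<and> hd (g inp) < last (g stk)"
            then have "inp \<noteq> []" by auto
            then obtain y ys where inp: "inp = y # ys" by (cases inp) auto
            have "last stk = Suc (last (g stk))" using "1.prems"(3) stk False by simp
            then have "y \<ge> Suc (last (g stk))" using pop inp stk by auto
            then show False using a inp "1.prems"(1) by (cases "y = 1") auto
          qed
          have gs: "g stk = (t - 1) # g ts" using stk False by simp
          have nb'': "\<not> (g inp = [] \<and> (t - 1) # g ts = [])" by simp
          have c': "\<not> (g inp \<noteq> [] \<and> ((t - 1) # g ts = [] \<or> hd (g inp) < last ((t - 1) # g ts)))"
            using c gs by simp
          have "s12_aux (g inp) ((t - 1) # g ts) (g out) = s12_aux (g inp) (g ts) (g out @ [t - 1])"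
            by (subst s12_aux.simps) (simp only: if_not_P[OF nb''] if_not_P[OF c'] list.sel)
          then show ?thesis using gs by simp
        qed
        then show ?thesis using L IH stk False by simp
      qed
    qed
  qed
qed

theorem lemma3p3:
  fixes n i :: nat and p :: "nat list"
  assumes "n \<ge> 1" and "is_perm n p" and "1 \<le> i" and "i \<le> n + 1"
  shows "map (\<lambda>x. x - 1) (filter (\<lambda>x. x \<noteq> 1) (s12 (ins i p))) = s12 p"
proof -
  have p0: "0 \<notin> set p" using assms(2) by (auto simp: is_perm_def)
  have gi: "g (inc p) = p" using p0 by (induction p) (auto simp: inc_def)
  have "g (ins i p) = g (take (i - 1) (inc p)) @ g (drop (i - 1) (inc p))"
    unfolding ins_def by simp
  also have "\<dots> = g (inc p)" by (simp only: g_simps(5)[symmetric] append_take_drop_id)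
  finally have gp: "g (ins i p) = p" using gi by simp
  have "set (ins i p) \<subseteq> insert 1 (set (inc p))"
    unfolding ins_def by (auto dest: in_set_takeD in_set_dropD)
  moreover have "0 \<notin> set (inc p)" by (auto simp: inc_def)
  ultimately have z: "0 \<notin> set (ins i p)" by auto
  have "g (s12 (ins i p)) = s12 p"
    using key[of "ins i p" "[]" "[]", OF z] gp unfolding s12_def by simp
  then show ?thesis by (simp add: g_def)
qed

end
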